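(* Skeptic can weakly force the event \[ E_2:=\{\xi\in\Omega:\ |s_n|>\sqrt n-1\ \text{for infinitely many } n\}. \]
   Context: Fair-coin game: in rounds $n=1,2,\dots$ Skeptic announces $M_n\in\mathbb{R}$ (depending only on $x_1,\dots,x_{n-1}$), then Reality announces $x_n\in\{-1,1\}$. A path is an infinite sequence $\xi=x_1x_2\cdots\in\{-1,1\}^{\mathbb{N}}$, and $\Omega$ is the set of paths. We write $s_n:=x_1+\cdots+x_n$, with $s_0=0$. A strategy $\mathcal{P}$ assigns a real bet $\mathcal{P}(x_1\cdots x_{n-1})$ to each finite sequence. Its capital process with zero initial capital is $\mathcal{K}^{\mathcal{P}}_n(\xi)=\sum_{k=1}^n\mathcal{P}(x_1\cdots x_{k-1})x_k$. Skeptic weakly forces $E\subseteq\Omega$ if there is a strategy $\mathcal{P}$ such that $\mathcal{K}^{\mathcal{P}}_n(\xi)\ge-1$ for all $\xi\in\Omega$ and $n\ge0$, and $\limsup_n\mathcal{K}^{\mathcal{P}}_n(\xi)=\infty$ for every $\xi\notin E$. *)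

theory Defs
  imports "HOL-Analysis.Analysis" "HOL-Library.Extended_Real"
begin

text \<open>A path \<xi> = x_1 x_2 ... is represented as a function nat => real with
  \<xi> k = x_(k+1) in {-1,1}.\<close>

definition paths :: "(nat \<Rightarrow> real) set" where
  "paths = {\<xi>. \<forall>k. \<xi> k \<in> {-1, 1}}"

definition partial_sum :: "(nat \<Rightarrow> real) \<Rightarrow> nat \<Rightarrow> real" where
  "partial_sum \<xi> n = (\<Sum>k<n. \<xi> k)"

text \<open>A strategy maps a finite sequence x_1 ... x_(n-1) (as a list) to a real bet.\<close>
type_synonym strategy = "real list \<Rightarrow> real"

definition capital :: "strategy \<Rightarrow> nat \<Rightarrow> (nat \<Rightarrow> real) \<Rightarrow> real" where
  "capital P n \<xi> = (\<Sum>k<n. P (map \<xi> [0..<k]) * \<xi> k)"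

definition weakly_forces :: "(nat \<Rightarrow> real) set \<Rightarrow> bool" where
  "weakly_forces E \<longleftrightarrow> (\<exists>P::strategy.
      (\<forall>\<xi>\<in>paths. \<forall>n. capital P n \<xi> \<ge> -1) \<and>
      (\<forall>\<xi>\<in>paths. \<xi> \<notin> E \<longrightarrow> limsup (\<lambda>n. ereal (capital P n \<xi>)) = \<infinity>))"

definition E2 :: "(nat \<Rightarrow> real) set" where
  "E2 = {\<xi>\<in>paths. \<exists>\<^sub>\<infinity>n. \<bar>partial_sum \<xi> n\<bar> > sqrt (real n) - 1}"

end

theory Submission
  imports Defs
begin

definition inR :: "(nat \<Rightarrow> real) \<Rightarrow> nat \<Rightarrow> bool" where
  "inR \<xi> j \<longleftrightarrow> \<bar>partial_sum \<xi> j\<bar> \<le> sqrt (real j) - 1"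

definition cc :: "nat \<Rightarrow> real" where
  "cc m = 1 / (real m * 2 ^ m)"

definition Vf :: "(nat \<Rightarrow> real) \<Rightarrow> nat \<Rightarrow> real" where
  "Vf \<xi> k = real k - (partial_sum \<xi> k)\<^sup>2"

definition actl :: "nat \<Rightarrow> real list \<Rightarrow> bool" where
  "actl m l \<longleftrightarrow> m \<le> length l \<and>
     (\<forall>j. m \<le> j \<and> j \<le> length l \<longrightarrow> \<bar>sum_list (take j l)\<bar> \<le> sqrt (real j) - 1)"

definition strat :: strategy where
  "strat l = (\<Sum>m\<in>{1..length l}. if actl m l then -2 * cc m * sum_list l else 0)"

definition act :: "(nat \<Rightarrow> real) \<Rightarrow> nat \<Rightarrow> nat \<Rightarrow> bool" where
  "act \<xi> m k \<longleftrightarrow> m \<le> k \<and> (\<forall>j. m \<le> j \<and> j \<le> k \<longrightarrow> inR \<xi> j)"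

definition comp :: "nat \<Rightarrow> nat \<Rightarrow> (nat \<Rightarrow> real) \<Rightarrow> real" where
  "comp m n \<xi> = (\<Sum>k<n. if act \<xi> m k then -2 * cc m * partial_sum \<xi> k * \<xi> k else 0)"

lemma sum_list_prefix: "sum_list (map \<xi> [0..<k]) = partial_sum \<xi> k"
  unfolding partial_sum_def by (simp add: sum_list_sum_nth atLeast0LessThan)

lemma actl_prefix: "actl m (map \<xi> [0..<k]) = act \<xi> m k"
  unfolding actl_def act_def inR_def
  by (auto simp: take_map sum_list_prefix min_def)

lemma capital_comp: "capital strat n \<xi> = (\<Sum>m\<in>{1..n}. comp m n \<xi>)"
proof -
  let ?h = "\<lambda>m k. if act \<xi> m k then -2 * cc m * partial_sum \<xi> k * \<xi> k else 0"
  have "capital strat n \<xi> = (\<Sum>k<n. \<Sum>m\<in>{1..k}. ?h m k)"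
    unfolding capital_def strat_def actl_prefix sum_list_prefix length_map length_upt
    by (auto simp: sum_distrib_right intro!: sum.cong)
  also have "\<dots> = (\<Sum>k<n. \<Sum>m\<in>{1..n}. ?h m k)"
  proof (rule sum.cong[OF refl])
    fix k assume "k \<in> {..<n}"
    then show "(\<Sum>m\<in>{1..k}. ?h m k) = (\<Sum>m\<in>{1..n}. ?h m k)"
      by (intro sum.mono_neutral_left) (auto simp: act_def)
  qed
  also have "\<dots> = (\<Sum>m\<in>{1..n}. comp m n \<xi>)"
    unfolding comp_def by (rule sum.swap)
  finally show ?thesis .
qed

lemma ps_Suc: "partial_sum \<xi> (Suc n) = partial_sum \<xi> n + \<xi> n"
  unfolding partial_sum_def by simp

lemma path_sq: "\<xi> \<in> paths \<Longrightarrow> (\<xi> k)\<^sup>2 = 1"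
proof -
  assume "\<xi> \<in> paths"
  then have "\<xi> k = -1 \<or> \<xi> k = 1" unfolding paths_def by auto
  then show ?thesis by auto
qed

lemma path_abs: "\<xi> \<in> paths \<Longrightarrow> \<bar>\<xi> k\<bar> = 1"
proof -
  assume "\<xi> \<in> paths"
  then have "\<xi> k = -1 \<or> \<xi> k = 1" unfolding paths_def by auto
  then show ?thesis by auto
qed

lemma V_step: "\<xi> \<in> paths \<Longrightarrow> Vf \<xi> (Suc n) - Vf \<xi> n = -2 * partial_sum \<xi> n * \<xi> n"
  unfolding Vf_def ps_Suc using path_sq[of \<xi> n]
  by (simp add: power2_eq_square algebra_simps)

lemma V_exit: assumes "\<xi> \<in> paths" "inR \<xi> n" shows "Vf \<xi> (Suc n) \<ge> 0"
proof -
  have a: "\<bar>partial_sum \<xi> (Suc n)\<bar> \<le> \<bar>partial_sum \<xi> n\<bar> + 1"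
    unfolding ps_Suc using path_abs[OF assms(1), of n] by linarith
  have "sqrt (real n) \<le> sqrt (real (Suc n))" by simp
  with a assms(2) have b: "\<bar>partial_sum \<xi> (Suc n)\<bar> \<le> sqrt (real (Suc n))"
    unfolding inR_def by linarith
  have "(partial_sum \<xi> (Suc n))\<^sup>2 \<le> (sqrt (real (Suc n)))\<^sup>2"
    using b by (metis abs_le_square_iff abs_of_nonneg real_sqrt_ge_zero of_nat_0_le_iff)
  then show ?thesis unfolding Vf_def by simp
qed

lemma comp_ind:
  assumes "\<xi> \<in> paths"
  shows "(n \<le> m \<longrightarrow> comp m n \<xi> = 0) \<and>
         (m \<le> n \<and> (\<forall>j. m \<le> j \<and> j < n \<longrightarrow> inR \<xi> j) \<longrightarrow> comp m n \<xi> = cc m * (Vf \<xi> n - Vf \<xi> m)) \<and>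
         comp m n \<xi> \<ge> - cc m * real m"
proof (induction n)
  case 0
  have "cc m \<ge> 0" unfolding cc_def by simp
  then show ?case by (simp add: comp_def)
next
  case (Suc n)
  have cpos: "cc m \<ge> 0" unfolding cc_def by simp
  have Vm: "Vf \<xi> m \<le> real m" unfolding Vf_def by simp
  have rec: "comp m (Suc n) \<xi> = comp m n \<xi> + (if act \<xi> m n then -2 * cc m * partial_sum \<xi> n * \<xi> n else 0)"
    unfolding comp_def by simp
  show ?case
  proof (cases "act \<xi> m n")
    case True
    then have mn: "m \<le> n" and allj: "\<forall>j. m \<le> j \<and> j \<le> n \<longrightarrow> inR \<xi> j" unfolding act_def by auto
    have cn: "comp m n \<xi> = cc m * (Vf \<xi> n - Vf \<xi> m)" using Suc.IH mn allj by auto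
    have c1: "comp m (Suc n) \<xi> = cc m * (Vf \<xi> (Suc n) - Vf \<xi> m)"
    proof -
      have "comp m (Suc n) \<xi> = cc m * (Vf \<xi> n - Vf \<xi> m) + cc m * (-2 * partial_sum \<xi> n * \<xi> n)"
        using rec True cn by simp
      also have "\<dots> = cc m * (Vf \<xi> n - Vf \<xi> m) + cc m * (Vf \<xi> (Suc n) - Vf \<xi> n)"
        using V_step[OF assms, of n] by simp
      also have "\<dots> = cc m * (Vf \<xi> (Suc n) - Vf \<xi> m)" by (simp add: algebra_simps)
      finally show ?thesis .
    qed
    have "Vf \<xi> (Suc n) \<ge> 0" using V_exit[OF assms] allj mn by auto
    then have "Vf \<xi> (Suc n) - Vf \<xi> m \<ge> - real m" using Vm by linarith
    then have "cc m * (Vf \<xi> (Suc n) - Vf \<xi> m) \<ge> cc m * (- real m)"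
      using cpos by (rule mult_left_mono)
    then show ?thesis using c1 mn by auto
  next
    case False
    have c1: "comp m (Suc n) \<xi> = comp m n \<xi>" using rec False by simp
    have "m \<le> Suc n \<and> (\<forall>j. m \<le> j \<and> j < Suc n \<longrightarrow> inR \<xi> j) \<Longrightarrow> comp m (Suc n) \<xi> = cc m * (Vf \<xi> (Suc n) - Vf \<xi> m)"
    proof -
      assume h: "m \<le> Suc n \<and> (\<forall>j. m \<le> j \<and> j < Suc n \<longrightarrow> inR \<xi> j)"
      have "\<not> m \<le> n" using h False unfolding act_def by auto
      then have "m = Suc n" using h by auto
      then show ?thesis using c1 Suc.IH by auto
    qed
    then show ?thesis using c1 Suc.IH False unfolding act_def by auto
  qed
qed

lemma half_sum: "(\<Sum>m\<in>{1..n}. (1/2::real) ^ m) = 1 - (1/2) ^ n"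
  by (induction n) (auto simp: sum.atLeast_Suc_atMost_Suc_shift)

lemma cc_m: "m \<ge> 1 \<Longrightarrow> cc m * real m = (1/2) ^ m"
  unfolding cc_def by (simp add: power_one_over)

lemma sum_lower:
  assumes "\<xi> \<in> paths" "A \<subseteq> {1..n}"
  shows "(\<Sum>m\<in>A. comp m n \<xi>) \<ge> -1"
proof -
  have "(\<Sum>m\<in>A. comp m n \<xi>) \<ge> (\<Sum>m\<in>A. - ((1/2::real) ^ m))"
  proof (rule sum_mono)
    fix m assume "m \<in> A"
    then have "m \<ge> 1" using assms(2) by auto
    then show "- ((1/2::real) ^ m) \<le> comp m n \<xi>"
      using comp_ind[OF assms(1), of n m] cc_m[of m] by simp
  qed
  moreover have "(\<Sum>m\<in>A. ((1/2::real) ^ m)) \<le> (\<Sum>m\<in>{1..n}. (1/2::real) ^ m)"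
    by (rule sum_mono2) (use assms(2) in auto)
  moreover have "(\<Sum>m\<in>{1..n}. (1/2::real) ^ m) \<le> 1" using half_sum by simp
  ultimately show ?thesis by (simp add: sum_negf)
qed


lemma V_in: assumes "inR \<xi> n" shows "Vf \<xi> n \<ge> 2 * sqrt (real n) - 1"
proof -
  have h: "\<bar>partial_sum \<xi> n\<bar> \<le> sqrt (real n) - 1" using assms unfolding inR_def .
  then have "(partial_sum \<xi> n)\<^sup>2 \<le> (sqrt (real n) - 1)\<^sup>2"
    by (metis abs_ge_zero abs_le_square_iff abs_of_nonneg order_trans)
  also have "\<dots> = real n - 2 * sqrt (real n) + 1"
    by (simp add: power2_eq_square algebra_simps)
  finally show ?thesis unfolding Vf_def by simp
qed

theorem theorem2:
  shows "weakly_forces E2"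
  unfolding weakly_forces_def
proof (intro exI[of _ strat] conjI ballI impI allI)
  fix \<xi> n assume "\<xi> \<in> paths"
  then show "capital strat n \<xi> \<ge> -1" using capital_comp sum_lower by simp
next
  fix \<xi> assume p: "\<xi> \<in> paths" and ne: "\<xi> \<notin> E2"
  have "\<not> (\<exists>\<^sub>\<infinity>n. \<bar>partial_sum \<xi> n\<bar> > sqrt (real n) - 1)" using p ne unfolding E2_def by auto
  then have "\<forall>\<^sub>\<infinity>n. inR \<xi> n" unfolding inR_def by (simp add: not_frequently not_less)
  then obtain N where N: "\<forall>n>N. inR \<xi> n" unfolding MOST_nat by blast
  define m where "m = Suc N"
  have m1: "m \<ge> 1" unfolding m_def by simp
  have inRm: "\<And>n. n \<ge> m \<Longrightarrow> inR \<xi> n" using N unfolding m_def by auto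
  have cpos: "cc m > 0" unfolding cc_def using m1 by simp
  have key: "capital strat n \<xi> \<ge> cc m * (2 * sqrt (real n) - 1 - real m) - 1" if nm: "n \<ge> m" for n
  proof -
    have c: "comp m n \<xi> = cc m * (Vf \<xi> n - Vf \<xi> m)"
      using comp_ind[OF p, of n m] nm inRm by auto
    have "Vf \<xi> n - Vf \<xi> m \<ge> 2 * sqrt (real n) - 1 - real m"
      using V_in[OF inRm[OF nm]] zero_le_power2[of "partial_sum \<xi> m"] unfolding Vf_def by linarith
    then have c2: "comp m n \<xi> \<ge> cc m * (2 * sqrt (real n) - 1 - real m)"
      unfolding c using cpos by (simp add: mult_left_mono)
    have mm: "m \<in> {1..n}" using m1 nm by simp
    have "capital strat n \<xi> = comp m n \<xi> + (\<Sum>j\<in>{1..n} - {m}. comp j n \<xi>)"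
      unfolding capital_comp using sum.remove[OF _ mm] by simp
    moreover have "(\<Sum>j\<in>{1..n} - {m}. comp j n \<xi>) \<ge> -1"
      by (rule sum_lower[OF p]) auto
    ultimately show ?thesis using c2 by linarith
  qed
  have "((\<lambda>n. ereal (capital strat n \<xi>)) \<longlongrightarrow> \<infinity>) sequentially"
    unfolding tendsto_PInfty eventually_sequentially
  proof
    fix r :: real
    define A where "A = ((r + 1) / cc m + 1 + real m) / 2"
    define n0 where "n0 = max m (nat \<lceil>A\<^sup>2\<rceil> + 1)"
    show "\<exists>N. \<forall>n\<ge>N. ereal r < ereal (capital strat n \<xi>)"
    proof (intro exI[of _ n0] allI impI)
      fix n assume n: "n0 \<le> n"
      then have nm: "n \<ge> m" unfolding n0_def by simp
      have "real n > A\<^sup>2" using n unfolding n0_def by linarith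
      then have "sqrt (real n) > sqrt (A\<^sup>2)" by (simp only: real_sqrt_less_iff)
      then have sA: "sqrt (real n) > A" by simp
      then have "2 * sqrt (real n) - 1 - real m > (r + 1) / cc m" unfolding A_def by simp
      then have "cc m * (2 * sqrt (real n) - 1 - real m) > r + 1"
        using cpos by (simp add: pos_divide_less_eq mult.commute)
      then show "ereal r < ereal (capital strat n \<xi>)" using key[OF nm] by simp
    qed
  qed
  then show "limsup (\<lambda>n. ereal (capital strat n \<xi>)) = \<infinity>"
    by (intro lim_imp_Limsup) simp_all
qed

end
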